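(* Let $r,K,\alpha,\phi,c,m_1,m_2,\lambda,a,d,\delta,\gamma,\sigma,\eta$ be positive constants with $\phi<1$ and $m_1>m_2$, and consider the system \[ \begin{cases} \dot X = rX\left(1-\frac{X}{K}\right)-\frac{\alpha XS}{c+X}-\frac{\phi\alpha XI}{c+X},\\[1mm] \dot S = \frac{m_1\alpha XS}{c+X}-\frac{\lambda AS}{a+A}-dS,\\[1mm] \dot I = \frac{m_2\phi\alpha XI}{c+X}+\frac{\lambda AS}{a+A}-(d+\delta)I,\\[1mm] \dot A = \gamma+\sigma(S+I)-\eta A. \end{cases} \] Assume $d+\delta<\frac{m_2\phi\alpha K}{c+K}$, and let $E_2=(\bar X,0,\bar I,\bar A)$ be the susceptible-pest-free equilibrium, where \[ \bar X=\frac{c(d+\delta)}{m_2\phi\alpha-(d+\delta)},\qquad \bar I=\frac{r(c+\bar X)(K-\bar X)}{\phi\alpha K},\qquad \bar A=\frac{\gamma+\sigma\bar I}{\eta}. \] Then $E_2$ is locally asymptotically stable if \[ \frac{m_1(d+\delta)(a+\bar A)}{(a+\bar A)(\lambda+d)-\lambda a}<m_2\phi<\frac{(K+c)(d+\delta)}{\alpha(K-c)}. \]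
   Context: The assumption $d+\delta<\frac{m_2\phi\alpha K}{c+K}$ is the paper's condition for existence of $E_2$ (equivalently $0<\bar X<K$). *)

theory Defs
  imports "HOL-Analysis.Analysis"
begin

type_synonym state = "real \<times> real \<times> real \<times> real"

definition pest_field ::
  "real \<Rightarrow> real \<Rightarrow> real \<Rightarrow> real \<Rightarrow> real \<Rightarrow> real \<Rightarrow> real \<Rightarrow> real \<Rightarrow> real \<Rightarrow>
   real \<Rightarrow> real \<Rightarrow> real \<Rightarrow> real \<Rightarrow> real \<Rightarrow> state \<Rightarrow> state" where
  "pest_field r K \<alpha> \<phi> c m1 m2 lam a d \<delta> \<gamma> \<sigma> \<eta> =
     (\<lambda>(X, S, I, A).
       (r * X * (1 - X / K) - \<alpha> * X * S / (c + X) - \<phi> * \<alpha> * X * I / (c + X),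
        m1 * \<alpha> * X * S / (c + X) - lam * A * S / (a + A) - d * S,
        m2 * \<phi> * \<alpha> * X * I / (c + X) + lam * A * S / (a + A) - (d + \<delta>) * I,
        \<gamma> + \<sigma> * (S + I) - \<eta> * A))"

definition is_solution :: "(state \<Rightarrow> state) \<Rightarrow> (real \<Rightarrow> state) \<Rightarrow> bool" where
  "is_solution F x \<longleftrightarrow>
     (\<forall>t\<ge>0. (x has_vector_derivative F (x t)) (at t within {0..}))"

definition loc_asym_stable :: "(state \<Rightarrow> state) \<Rightarrow> state \<Rightarrow> bool" where
  "loc_asym_stable F e \<longleftrightarrow>
     F e = 0 \<and>
     (\<forall>\<epsilon>>0. \<exists>\<delta>>0. \<forall>x. is_solution F x \<and> dist (x 0) e < \<delta> \<longrightarrow>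
        (\<forall>t\<ge>0. dist (x t) e < \<epsilon>)) \<and>
     (\<exists>\<delta>>0. \<forall>x. is_solution F x \<and> dist (x 0) e < \<delta> \<longrightarrow> (x \<longlongrightarrow> e) at_top)"

end

theory Submission
  imports Defs "HOL-Real_Asymp.Real_Asymp"
begin




lemma lyap_LAS:
  fixes F L :: "state \<Rightarrow> state" and e :: state and V :: "state \<Rightarrow> real"
    and DV :: "state \<Rightarrow> state \<Rightarrow> real"
  assumes Fe: "F e = 0" and FD: "(F has_derivative L) (at e)"
    and m: "m > 0" and Vlo: "\<And>y. m * (norm y)^2 \<le> V y"
    and M: "M > 0" and Vhi: "\<And>y. V y \<le> M * (norm y)^2"
    and VD: "\<And>y. (V has_derivative DV y) (at y)"
    and k: "\<kappa> > 0" and DVL: "\<And>y. DV y (L y) \<le> - \<kappa> * (norm y)^2"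
    and B: "B > 0" and DVB: "\<And>y v. \<bar>DV y v\<bar> \<le> B * norm y * norm v"
  shows "loc_asym_stable F e"
proof -
  have kB: "\<kappa>/(2 * B) > 0" using k B by simp
  obtain \<rho> where rho: "\<rho> > 0" "\<And>y. norm y < \<rho> \<Longrightarrow> norm (F (e + y) - L y) \<le> (\<kappa>/(2 * B)) * norm y"
  proof -
    from FD have "\<forall>\<epsilon>>0. \<exists>d>0. \<forall>z\<in>UNIV. norm (z - e) < d \<longrightarrow> norm (F z - F e - L (z - e)) \<le> \<epsilon> * norm (z - e)"
      using has_derivative_within_alt by blast
    then obtain d where d: "d>0" "\<forall>z. norm (z - e) < d \<longrightarrow> norm (F z - F e - L (z - e)) \<le> (\<kappa>/(2 * B)) * norm (z - e)"
      using kB by blast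
    show ?thesis
    proof (rule that[of d])
      fix y :: state assume "norm y < d"
      then show "norm (F (e + y) - L y) \<le> (\<kappa>/(2 * B)) * norm y"
        using d(2)[rule_format, of "e+y"] Fe by simp
    qed (use d in auto)
  qed
  have lin: "\<And>y. linear (DV y)" using VD has_derivative_linear by blast
  have key: "DV y (F (e + y)) \<le> -(\<kappa>/2) * (norm y)^2" if "norm y < \<rho>" for y
  proof -
    have "DV y (F(e+y)) = DV y (L y) + DV y (F (e+y) - L y)"
      using linear_diff[OF lin[of y]] by simp
    moreover have "DV y (F(e+y) - L y) \<le> B * norm y * ((\<kappa>/(2 * B)) * norm y)"
    proof -
      have "DV y (F(e+y) - L y) \<le> B * norm y * norm (F(e+y) - L y)" using DVB[of y] by (meson abs_le_D1)
      also have "\<dots> \<le> B * norm y * ((\<kappa>/(2 * B)) * norm y)"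
        using rho(2)[OF that] B by (intro mult_left_mono) auto
      finally show ?thesis .
    qed
    moreover have "B * norm y * ((\<kappa>/(2 * B)) * norm y) = (\<kappa>/2) * (norm y)^2"
      using B by (simp add: power2_eq_square field_simps)
    ultimately show ?thesis using DVL[of y] by linarith
  qed
  have gder: "((\<lambda>t. V (x t - e)) has_real_derivative DV (x t - e) (F (x t))) (at t)"
    if sol: "is_solution F x" and t: "t > 0" for x t
  proof -
    have "(x has_vector_derivative F (x t)) (at t within {0..})" using sol t unfolding is_solution_def by auto
    then have "(x has_vector_derivative F (x t)) (at t within {0<..})"
      by (rule has_vector_derivative_within_subset) auto
    then have xd: "(x has_vector_derivative F (x t)) (at t)"
      using t at_within_open[of t "{0<..}"] by auto
    then have xd2: "((\<lambda>t. x t - e) has_derivative (\<lambda>h. h *\<^sub>R F (x t))) (at t)"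
      unfolding has_vector_derivative_def by (auto intro!: derivative_eq_intros)
    have "((\<lambda>t. V (x t - e)) has_derivative (\<lambda>h. DV (x t - e) (h *\<^sub>R F (x t)))) (at t)"
      using has_derivative_compose[OF xd2 VD] by simp
    moreover have "(\<lambda>h. DV (x t - e) (h *\<^sub>R F (x t))) = (\<lambda>h. DV (x t - e) (F (x t)) * h)"
      using linear_scale[OF lin] by auto
    ultimately show ?thesis unfolding has_field_derivative_def by simp
  qed
  have gcont: "continuous_on {0..T} (\<lambda>t. V (x t - e))" if sol: "is_solution F x" for x T
  proof -
    have "continuous_on {0..} x"
      unfolding continuous_on_eq_continuous_within
      using sol unfolding is_solution_def by (auto intro: has_vector_derivative_continuous)
    then have "continuous_on {0..T} x" by (rule continuous_on_subset) auto
    then have c1: "continuous_on {0..T} (\<lambda>t. x t - e)" by (intro continuous_intros)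
    have c2: "continuous_on UNIV V"
      using VD by (meson continuous_at_imp_continuous_on has_derivative_continuous)
    show ?thesis by (rule continuous_on_compose2[OF c2 c1]) auto
  qed
  have trap: "\<forall>t\<ge>0. V (x t - e) < c0"
    if sol: "is_solution F x" and c0: "c0 \<le> m * \<rho>^2" and x0: "V (x 0 - e) < c0" for x c0
  proof (rule ccontr)
    let ?g = "\<lambda>t. V (x t - e)"
    assume "\<not> ?thesis"
    then obtain t1 where t1: "t1 \<ge> 0" "?g t1 \<ge> c0" by auto
    define S where "S = {0..t1} \<inter> ?g -` {c0..}"
    have clS: "closed S" unfolding S_def
      by (rule continuous_closed_preimage[OF gcont[OF sol]]) auto
    have "t1 \<in> S" using t1 by (auto simp: S_def)
    then have neS: "S \<noteq> {}" by auto
    have bS: "bdd_below S" unfolding S_def by (rule bdd_belowI[of _ 0]) auto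
    define T where "T = Inf S"
    have TS: "T \<in> S" using closed_contains_Inf[OF neS bS clS] T_def by simp
    then have T0: "T \<ge> 0" "?g T \<ge> c0" by (auto simp: S_def)
    have T1: "T \<le> t1" using TS by (auto simp: S_def)
    have below: "?g t < c0" if "0 \<le> t" "t < T" for t
    proof (rule ccontr)
      assume "\<not> ?g t < c0"
      then have "t \<in> S" using that T1 by (auto simp: S_def)
      then have "T \<le> t" unfolding T_def using bS by (rule cInf_lower)
      then show False using that by simp
    qed
    have "?g T \<le> ?g 0"
    proof (rule DERIV_nonpos_imp_decreasing_open[OF T0(1)])
      fix t assume tt: "0 < t" "t < T"
      have "m * (norm (x t - e))^2 < m * \<rho>^2" using Vlo[of "x t - e"] below[of t] tt c0 by linarith
      then have "(norm (x t - e))^2 < \<rho>^2" using m by simp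
      then have "norm (x t - e) < \<rho>" using rho(1) by (meson abs_norm_cancel power2_less_imp_less less_le)
      then have "DV (x t - e) (F (e + (x t - e))) \<le> -(\<kappa>/2) * (norm (x t - e))^2" by (rule key)
      moreover have "-(\<kappa>/2) * (norm (x t - e))^2 \<le> 0" using k by simp
      ultimately have "DV (x t - e) (F (x t)) \<le> 0" by simp
      then show "\<exists>y. ((\<lambda>t. V (x t - e)) has_real_derivative y) (at t) \<and> y \<le> 0"
        using gder[OF sol tt(1)] by blast
    qed (rule gcont[OF sol])
    then show False using T0 x0 by linarith
  qed
  have Vlt: "V y < m * r^2" if "norm y < sqrt (m * r^2 / (2 * M))" "r > 0" for y r
  proof -
    have "(norm y)^2 < (sqrt (m * r^2 / (2 * M)))^2"
      using that by (intro power_strict_mono) auto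
    then have "(norm y)^2 < m * r^2 / (2 * M)" using m M by simp
    then have "M * (norm y)^2 < M * (m * r^2 / (2 * M))" using M by (rule mult_strict_left_mono)
    also have "\<dots> = m * r^2 / 2" using M by simp
    also have "\<dots> < m * r^2" using m that(2) by simp
    finally show ?thesis using Vhi[of y] by linarith
  qed
  have small: "norm y < r" if "V y < m * r^2" "r > 0" for y r
  proof -
    have "m * (norm y)^2 < m * r^2" using Vlo[of y] that by linarith
    then have "(norm y)^2 < r^2" using m by simp
    then show ?thesis using that(2) by (meson abs_norm_cancel power2_less_imp_less less_le)
  qed
  have stab: "\<forall>\<epsilon>>0. \<exists>\<delta>>0. \<forall>x. is_solution F x \<and> dist (x 0) e < \<delta> \<longrightarrow> (\<forall>t\<ge>0. dist (x t) e < \<epsilon>)"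
  proof (intro allI impI)
    fix \<epsilon> :: real assume ep: "\<epsilon> > 0"
    define r where "r = min \<epsilon> \<rho>"
    have r: "r > 0" "r \<le> \<epsilon>" "r \<le> \<rho>" using ep rho(1) by (auto simp: r_def)
    have "m * r^2 \<le> m * \<rho>^2" using r m by (intro mult_left_mono power_mono) auto
    show "\<exists>\<delta>>0. \<forall>x. is_solution F x \<and> dist (x 0) e < \<delta> \<longrightarrow> (\<forall>t\<ge>0. dist (x t) e < \<epsilon>)"
    proof (intro exI[of _ "sqrt (m * r^2 / (2 * M))"] conjI allI impI)
      show "sqrt (m * r^2 / (2 * M)) > 0" using m M r by simp
      fix x and t :: real assume xa: "is_solution F x \<and> dist (x 0) e < sqrt (m * r^2 / (2 * M))" and t: "0 \<le> t"
      then have "V (x 0 - e) < m * r^2" using Vlt[of "x 0 - e" r] r by (simp add: dist_norm)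
      then have "V (x t - e) < m * r^2" using trap[of x "m * r^2"] xa t \<open>m * r^2 \<le> m * \<rho>^2\<close> by blast
      then have "norm (x t - e) < r" using small r by blast
      then show "dist (x t) e < \<epsilon>" using r by (simp add: dist_norm)
    qed
  qed
  have attr: "\<exists>\<delta>>0. \<forall>x. is_solution F x \<and> dist (x 0) e < \<delta> \<longrightarrow> (x \<longlongrightarrow> e) at_top"
  proof (intro exI[of _ "sqrt (m * \<rho>^2 / (2 * M))"] conjI allI impI)
    show "sqrt (m * \<rho>^2 / (2 * M)) > 0" using m M rho by simp
    fix x assume xa: "is_solution F x \<and> dist (x 0) e < sqrt (m * \<rho>^2 / (2 * M))"
    then have sol: "is_solution F x" by simp
    have "V (x 0 - e) < m * \<rho>^2" using Vlt[of "x 0 - e" \<rho>] rho xa by (simp add: dist_norm)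
    then have inr: "\<forall>t\<ge>0. norm (x t - e) < \<rho>" using trap[of x "m * \<rho>^2"] sol small rho(1) by blast
    define kk where "kk = \<kappa> / (2 * M)"
    have kk: "kk > 0" using k M by (simp add: kk_def)
    define h where "h = (\<lambda>t. V (x t - e) * exp (kk * t))"
    have hle: "h t \<le> h 0" if t: "t \<ge> 0" for t
    proof (rule DERIV_nonpos_imp_decreasing_open[OF t])
      fix s assume s: "0 < s" "s < t"
      let ?y = "x s - e"
      have d: "(h has_real_derivative (DV ?y (F (x s)) * exp (kk * s) + V ?y * (exp (kk * s) * kk))) (at s)"
        unfolding h_def by (rule derivative_eq_intros gder[OF sol s(1)] refl | simp)+
      have "DV ?y (F (x s)) \<le> -(\<kappa>/2) * (norm ?y)^2" using key[of ?y] inr s by auto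
      moreover have "V ?y * kk \<le> M * (norm ?y)^2 * kk" using Vhi[of ?y] kk by (intro mult_right_mono) auto
      moreover have "M * (norm ?y)^2 * kk = (\<kappa>/2) * (norm ?y)^2" using M by (simp add: kk_def)
      ultimately have "DV ?y (F (x s)) + V ?y * kk \<le> 0" by linarith
      then have "(DV ?y (F (x s)) + V ?y * kk) * exp (kk * s) \<le> 0"
        by (simp add: mult_nonpos_nonneg)
      then have "DV ?y (F (x s)) * exp (kk * s) + V ?y * (exp (kk * s) * kk) \<le> 0"
        by (simp add: algebra_simps)
      then show "\<exists>y. (h has_real_derivative y) (at s) \<and> y \<le> 0" using d by blast
    next
      show "continuous_on {0..t} h" unfolding h_def
        by (intro continuous_intros gcont[OF sol])
    qed
    define C where "C = V (x 0 - e) / m"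
    have bound: "norm (x t - e) \<le> sqrt (C * exp (- kk * t))" if t: "t \<ge> 0" for t
    proof -
      have "m * (norm (x t - e))^2 * exp (kk * t) \<le> h t"
        unfolding h_def using Vlo[of "x t - e"] by (intro mult_right_mono) auto
      also have "\<dots> \<le> h 0" using hle[OF t] .
      also have "\<dots> = V (x 0 - e)" by (simp add: h_def)
      finally have "(norm (x t - e))^2 \<le> C * exp (- kk * t)"
        using m by (simp add: C_def field_simps exp_minus)
      then show ?thesis by (simp add: real_le_rsqrt)
    qed
    have "((\<lambda>t. sqrt (C * exp (- kk * t))) \<longlongrightarrow> 0) at_top"
    proof -
      have "((\<lambda>t. exp (- kk * t)) \<longlongrightarrow> 0) at_top"
        using kk by real_asymp
      then have "((\<lambda>t. sqrt (C * exp (- kk * t))) \<longlongrightarrow> sqrt (C * 0)) at_top"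
        by (intro tendsto_intros)
      then show ?thesis by simp
    qed
    then have "((\<lambda>t. x t - e) \<longlongrightarrow> 0) at_top"
      by (rule Lim_null_comparison[rotated]) (use bound in \<open>auto simp: eventually_at_top_linorder\<close>)
    then show "(x \<longlongrightarrow> e) at_top" by (simp add: LIM_zero_iff)
  qed
  show ?thesis unfolding loc_asym_stable_def using Fe stab attr by blast
qed



lemma amgm: fixes tt uu vv :: real assumes "tt > 0" shows "2 * uu * vv \<le> tt * uu^2 + vv^2/tt"
proof -
  have "0 \<le> (tt * uu - vv)^2" by simp
  then have "2 * tt * uu * vv \<le> tt * (tt * uu^2) + vv^2" by (simp add: power2_eq_square algebra_simps)
  then have "tt * (2 * uu * vv) \<le> tt * (tt * uu^2 + vv^2/tt)" using assms by (simp add: algebra_simps)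
  then show ?thesis using assms by simp
qed

lemma quad_form:
  fixes p q w \<mu> \<sigma> \<eta> g h :: real
  assumes p: "p < 0" and q: "q > 0" and w: "w > 0" and mu: "\<mu> < 0" and sg: "\<sigma> > 0" and et: "\<eta> > 0"
  shows "\<exists>\<beta> Ks \<epsilon> \<kappa>. \<beta> > 0 \<and> Ks > 0 \<and> \<epsilon> > 0 \<and> \<kappa> > 0 \<and> \<beta>^2 \<le> w * q/4 \<and>
     (\<forall>x s i a. 2 * w * x * (p * x + g * s - q * i) + 2 * q * i * (w * x + h * s) + 2 * \<beta> * (x * (w * x+h * s) + i * (p * x+g * s-q * i))
        + 2 * Ks * s * (\<mu> * s) + 2 * \<epsilon> * a * (\<sigma> * s+\<sigma> * i-\<eta> * a) \<le> -\<kappa> * (x^2+s^2+i^2+a^2))"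
proof -
  define \<beta> where "\<beta> = min (min (-p/2) (-(q * w)/(2 * p))) (min 1 (w * q/4))"
  have b0: "\<beta> > 0" using p q w by (simp add: \<beta>_def divide_pos_neg)
  have b1: "\<beta> \<le> -p/2" by (simp add: \<beta>_def)
  have b2': "\<beta> \<le> -(q * w)/(2 * p)" by (simp add: \<beta>_def)
  have b2: "2 * \<beta> * (-p) \<le> q * w"
  proof -
    have "\<beta> * (-2 * p) \<le> (-(q * w)/(2 * p)) * (-2 * p)" using b2' p by (intro mult_right_mono) auto
    also have "\<dots> = q * w" using p by (simp add: field_simps)
    finally show ?thesis by (simp add: algebra_simps)
  qed
  have b3: "\<beta>^2 \<le> w * q/4"
  proof -
    have "\<beta> \<le> 1" "\<beta> \<le> w * q/4" by (simp_all add: \<beta>_def)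
    then have "\<beta> * \<beta> \<le> 1 * \<beta>" using b0 by (intro mult_right_mono) auto
    then show ?thesis using \<open>\<beta> \<le> w * q/4\<close> by (simp add: power2_eq_square)
  qed
  define A1 where "A1 = -w * p/2"
  define A2 where "A2 = \<beta> * q"
  define C1 where "C1 = w * g + \<beta> * h"
  define C2 where "C2 = q * h + \<beta> * g"
  define \<epsilon> where "\<epsilon> = A2 * \<eta>/(8 * \<sigma>^2)"
  define Ks where "Ks = (1 + 2 * C1^2/A1 + 4 * C2^2/A2 + 2 * \<epsilon> * \<sigma>^2/\<eta>)/(-2 * \<mu>)"
  define \<kappa> where "\<kappa> = min (min (A1/2) (A2/2)) (min (\<epsilon> * \<eta>) 1)"
  have A1: "A1 > 0" using w p by (simp add: A1_def mult_pos_neg)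
  have A2: "A2 > 0" using b0 q by (simp add: A2_def)
  have ep: "\<epsilon> > 0" using A2 et sg by (simp add: \<epsilon>_def)
  have Ksp: "Ks > 0" using A1 A2 ep sg et mu by (simp add: Ks_def divide_pos_neg add_pos_nonneg)
  have Ks_eq: "2 * Ks * \<mu> + 2 * C1^2/A1 + 4 * C2^2/A2 + 2 * \<epsilon> * \<sigma>^2/\<eta> = -1"
    using mu by (simp add: Ks_def field_simps)
  have ka: "\<kappa> > 0" using A1 A2 ep et by (simp add: \<kappa>_def)
  have k1: "\<kappa> \<le> A1/2" "\<kappa> \<le> A2/2" "\<kappa> \<le> \<epsilon> * \<eta>" "\<kappa> \<le> 1" by (simp_all add: \<kappa>_def)
  have main: "2 * w * x * (p * x + g * s - q * i) + 2 * q * i * (w * x + h * s) + 2 * \<beta> * (x * (w * x+h * s) + i * (p * x+g * s-q * i))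
        + 2 * Ks * s * (\<mu> * s) + 2 * \<epsilon> * a * (\<sigma> * s+\<sigma> * i-\<eta> * a) \<le> -\<kappa> * (x^2+s^2+i^2+a^2)" for x s i a
  proof -
    have id: "2 * w * x * (p * x + g * s - q * i) + 2 * q * i * (w * x + h * s) + 2 * \<beta> * (x * (w * x+h * s) + i * (p * x+g * s-q * i))
        + 2 * Ks * s * (\<mu> * s) + 2 * \<epsilon> * a * (\<sigma> * s+\<sigma> * i-\<eta> * a)
      = (2 * w * (p+\<beta>)) * x^2 + 2 * x * (\<beta> * p * i) - 2 * A2 * i^2 + 2 * x * (C1 * s) + 2 * i * (C2 * s) + (2 * Ks * \<mu>) * s^2
        + 2 * a * (\<epsilon> * \<sigma> * s) + 2 * i * (\<epsilon> * \<sigma> * a) - 2 * (\<epsilon> * \<eta>) * a^2"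
      by (simp add: A2_def C1_def C2_def power2_eq_square algebra_simps)
    have e1: "(2 * w * (p+\<beta>)) * x^2 \<le> (w * p) * x^2"
      using b1 w by (intro mult_right_mono) auto
    have e2: "2 * x * (\<beta> * p * i) \<le> A1 * x^2 + A2 * i^2"
    proof -
      have "2 * x * (\<beta> * p * i) \<le> A1 * x^2 + (\<beta> * p * i)^2/A1" by (rule amgm[OF A1])
      also have "(\<beta> * p * i)^2/A1 = (2 * \<beta> * (-p)) * (\<beta> * i^2/w)"
        using w p by (simp add: A1_def power2_eq_square field_simps)
      also have "\<dots> \<le> (q * w) * (\<beta> * i^2/w)" using b2 b0 w by (intro mult_right_mono) auto
      also have "\<dots> = A2 * i^2" using w by (simp add: A2_def)
      finally show ?thesis by simp
    qed
    have e3: "2 * x * (C1 * s) \<le> (A1/2) * x^2 + (2 * C1^2/A1) * s^2"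
      using amgm[of "A1/2" x "C1 * s"] A1 by (simp add: power2_eq_square field_simps)
    have e4: "2 * i * (C2 * s) \<le> (A2/4) * i^2 + (4 * C2^2/A2) * s^2"
      using amgm[of "A2/4" i "C2 * s"] A2 by (simp add: power2_eq_square field_simps)
    have e5: "2 * i * (\<epsilon> * \<sigma> * a) \<le> (A2/4) * i^2 + (\<epsilon> * \<eta>/2) * a^2"
    proof -
      have "2 * i * (\<epsilon> * \<sigma> * a) \<le> (A2/4) * i^2 + (\<epsilon> * \<sigma> * a)^2/(A2/4)" by (rule amgm) (use A2 in simp)
      also have "(\<epsilon> * \<sigma> * a)^2/(A2/4) = (\<epsilon> * \<eta>/2) * a^2"
        using A2 sg by (simp add: \<epsilon>_def power2_eq_square field_simps)
      finally show ?thesis .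
    qed
    have e6: "2 * a * (\<epsilon> * \<sigma> * s) \<le> (\<epsilon> * \<eta>/2) * a^2 + (2 * \<epsilon> * \<sigma>^2/\<eta>) * s^2"
      using amgm[of "\<epsilon> * \<eta>/2" a "\<epsilon> * \<sigma> * s"] ep et by (simp add: power2_eq_square field_simps)
    have wp: "w * p = -2 * A1" by (simp add: A1_def)
    have sum: "(2 * w * (p+\<beta>)) * x^2 + 2 * x * (\<beta> * p * i) - 2 * A2 * i^2 + 2 * x * (C1 * s) + 2 * i * (C2 * s) + (2 * Ks * \<mu>) * s^2
        + 2 * a * (\<epsilon> * \<sigma> * s) + 2 * i * (\<epsilon> * \<sigma> * a) - 2 * (\<epsilon> * \<eta>) * a^2
        \<le> -(A1/2) * x^2 - (A2/2) * i^2 - (\<epsilon> * \<eta>) * a^2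
           + (2 * Ks * \<mu> + 2 * C1^2/A1 + 4 * C2^2/A2 + 2 * \<epsilon> * \<sigma>^2/\<eta>) * s^2"
      using e1 e2 e3 e4 e5 e6 unfolding wp by (simp add: algebra_simps)
    have fin: "-(A1/2) * x^2 - (A2/2) * i^2 - (\<epsilon> * \<eta>) * a^2 - s^2 \<le> -\<kappa> * (x^2+s^2+i^2+a^2)"
    proof -
      have "\<kappa> * x^2 \<le> (A1/2) * x^2" "\<kappa> * i^2 \<le> (A2/2) * i^2" "\<kappa> * a^2 \<le> (\<epsilon> * \<eta>) * a^2" "\<kappa> * s^2 \<le> 1 * s^2"
        using k1 by (intro mult_right_mono; simp)+
      then show ?thesis by (simp add: algebra_simps)
    qed
    show ?thesis using id sum fin Ks_eq by simp
  qed
  show ?thesis using b0 Ksp ep ka b3 main by blast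
qed



lemma field_eq: "pest_field r K \<alpha> \<phi> c m1 m2 lam a d \<delta> \<gamma> \<sigma> \<eta> = (\<lambda>z.
       (r * fst z * (1 - fst z / K) - \<alpha> * fst z * fst (snd z) / (c + fst z) - \<phi> * \<alpha> * fst z * fst (snd (snd z)) / (c + fst z),
        m1 * \<alpha> * fst z * fst (snd z) / (c + fst z) - lam * snd (snd (snd z)) * fst (snd z) / (a + snd (snd (snd z))) - d * fst (snd z),
        m2 * \<phi> * \<alpha> * fst z * fst (snd (snd z)) / (c + fst z) + lam * snd (snd (snd z)) * fst (snd z) / (a + snd (snd (snd z))) - (d + \<delta>) * fst (snd (snd z)),
        \<gamma> + \<sigma> * (fst (snd z) + fst (snd (snd z))) - \<eta> * snd (snd (snd z))))"
  by (auto simp: pest_field_def fun_eq_iff split_beta)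

lemma deriv_F0:
  fixes z Ib Ab :: real
  assumes "z \<noteq> 0" "a + Ab \<noteq> 0" "K \<noteq> 0"
  shows "(pest_field r K \<alpha> \<phi> c m1 m2 lam a d \<delta> \<gamma> \<sigma> \<eta> has_derivative (\<lambda>v.
     ((r * (1 - 2 * (z-c)/K) - \<phi> * \<alpha> * c * Ib/z^2) * fst v + (-(\<alpha> * (z-c)/z)) * fst (snd v) - (\<phi> * \<alpha> * (z-c)/z) * fst (snd (snd v)),
      (m1 * \<alpha> * (z-c)/z - lam * Ab/(a+Ab) - d) * fst (snd v),
      (m2 * \<phi> * \<alpha> * c * Ib/z^2) * fst v + (lam * Ab/(a+Ab)) * fst (snd v) + (m2 * \<phi> * \<alpha> * (z-c)/z - (d+\<delta>)) * fst (snd (snd v)),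
      \<sigma> * fst (snd v) + \<sigma> * fst (snd (snd v)) - \<eta> * snd (snd (snd v))))) (at (z-c, 0, Ib, Ab))"
  unfolding field_eq
  apply (rule has_derivative_eq_rhs)
   apply (rule derivative_eq_intros refl | (simp add: assms; fail))+
  apply (rule ext)
  apply (simp add: prod_eq_iff)
  apply (intro conjI)
     apply (simp_all add: assms field_simps power2_eq_square)
  done


lemma normsq: "(norm (y::state))^2 = (fst y)^2 + (fst (snd y))^2 + (fst (snd (snd y)))^2 + (snd (snd (snd y)))^2"
proof -
  obtain x s i a where y: "y = (x, s, i, a)" using prod_cases4 by blast
  have "(norm y)^2 = (norm x)^2 + ((norm s)^2 + ((norm i)^2 + (norm a)^2))"
    unfolding y norm_Pair by simp
  then show ?thesis unfolding y by simp
qed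
lemma compb: "\<bar>fst (y::state)\<bar> \<le> norm y" "\<bar>fst (snd y)\<bar> \<le> norm y" "\<bar>fst (snd (snd y))\<bar> \<le> norm y" "\<bar>snd (snd (snd y))\<bar> \<le> norm y"
proof -
  have u: "\<bar>u\<bar> \<le> norm y" if "u^2 \<le> (norm y)^2" for u
  proof -
    have "\<bar>u\<bar>^2 \<le> (norm y)^2" using that by simp
    then show ?thesis by (rule power2_le_imp_le) simp
  qed
  have e: "(norm y)^2 = (fst y)^2 + (fst (snd y))^2 + (fst (snd (snd y)))^2 + (snd (snd (snd y)))^2"
    by (rule normsq)
  have nn: "0 \<le> (fst y)^2" "0 \<le> (fst (snd y))^2" "0 \<le> (fst (snd (snd y)))^2" "0 \<le> (snd (snd (snd y)))^2"
    by simp_all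
  have "(fst y)^2 \<le> (norm y)^2" using e nn by linarith
  then show "\<bar>fst (y::state)\<bar> \<le> norm y" by (rule u)
  have "(fst (snd y))^2 \<le> (norm y)^2" using e nn by linarith
  then show "\<bar>fst (snd y)\<bar> \<le> norm y" by (rule u)
  have "(fst (snd (snd y)))^2 \<le> (norm y)^2" using e nn by linarith
  then show "\<bar>fst (snd (snd y))\<bar> \<le> norm y" by (rule u)
  have "(snd (snd (snd y)))^2 \<le> (norm y)^2" using e nn by linarith
  then show "\<bar>snd (snd (snd y))\<bar> \<le> norm y" by (rule u)
qed

lemma absprod:
  fixes c u v N n :: real
  assumes "c \<ge> 0" "\<bar>u\<bar> \<le> N" "\<bar>v\<bar> \<le> n"
  shows "c * (u * v) \<le> c * (N * n) \<and> -(c * (u * v)) \<le> c * (N * n)"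
proof -
  have "\<bar>u * v\<bar> \<le> N * n" unfolding abs_mult using assms by (intro mult_mono) auto
  then have "c * \<bar>u * v\<bar> \<le> c * (N * n)" using assms(1) by (intro mult_left_mono) auto
  moreover have "c * (u * v) \<le> c * \<bar>u * v\<bar>" using assms(1) by (intro mult_left_mono) auto
  moreover have "c * (-(u * v)) \<le> c * \<bar>u * v\<bar>" using assms(1) by (intro mult_left_mono) auto
  ultimately show ?thesis by linarith
qed

lemma cross_bound:
  fixes w q \<beta> x i :: real
  assumes w: "w > 0" and q: "q > 0" and b: "\<beta>^2 \<le> w * q/4"
  shows "2 * \<beta> * x * i \<le> (w/2) * x^2 + (q/2) * i^2" "-(2 * \<beta> * x * i) \<le> (w/2) * x^2 + (q/2) * i^2"
proof -
  have r: "(\<beta> * i)^2/(w/2) \<le> (q/2) * i^2"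
  proof -
    have "(\<beta> * i)^2/(w/2) = (2/w) * (\<beta>^2 * i^2)" by (simp add: power_mult_distrib)
    also have "\<dots> \<le> (2/w) * ((w * q/4) * i^2)" using b w by (intro mult_left_mono mult_right_mono) auto
    also have "\<dots> = (q/2) * i^2" using w by simp
    finally show ?thesis .
  qed
  have "2 * x * (\<beta> * i) \<le> (w/2) * x^2 + (\<beta> * i)^2/(w/2)" by (rule amgm) (use w in simp)
  then show "2 * \<beta> * x * i \<le> (w/2) * x^2 + (q/2) * i^2" using r by (simp add: algebra_simps)
  have "2 * (-x) * (\<beta> * i) \<le> (w/2) * (-x)^2 + (\<beta> * i)^2/(w/2)" by (rule amgm) (use w in simp)
  then show "-(2 * \<beta> * x * i) \<le> (w/2) * x^2 + (q/2) * i^2" using r by (simp add: algebra_simps)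
qed

theorem theorem4:
  fixes r K \<alpha> \<phi> c m1 m2 lam a d \<delta> \<gamma> \<sigma> \<eta> :: real
  assumes pos: "r > 0" "K > 0" "\<alpha> > 0" "\<phi> > 0" "c > 0" "m1 > 0" "m2 > 0" "lam > 0"
      "a > 0" "d > 0" "\<delta> > 0" "\<gamma> > 0" "\<sigma> > 0" "\<eta> > 0"
    and "\<phi> < 1" and "m1 > m2"
    and E2_ex: "d + \<delta> < m2 * \<phi> * \<alpha> * K / (c + K)"
  defines "Xb \<equiv> c * (d + \<delta>) / (m2 * \<phi> * \<alpha> - (d + \<delta>))"
  defines "Ib \<equiv> r * (c + Xb) * (K - Xb) / (\<phi> * \<alpha> * K)"
  defines "Ab \<equiv> (\<gamma> + \<sigma> * Ib) / \<eta>"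
  assumes cond_low: "m1 * (d + \<delta>) * (a + Ab) / ((a + Ab) * (lam + d) - lam * a) < m2 * \<phi>"
    and cond_up: "m2 * \<phi> < (K + c) * (d + \<delta>) / (\<alpha> * (K - c))"
  shows "loc_asym_stable (pest_field r K \<alpha> \<phi> c m1 m2 lam a d \<delta> \<gamma> \<sigma> \<eta>) (Xb, 0, Ib, Ab)"
proof -
  define D where "D = m2 * \<phi> * \<alpha> - (d + \<delta>)"
  define P where "P = m2 * \<phi> * \<alpha>"
  have Pp: "P > 0" using pos by (simp add: P_def)
  have dd: "d + \<delta> > 0" using pos by simp
  have E2': "(d + \<delta>) * (c + K) < P * K"
    using E2_ex pos by (simp add: P_def pos_less_divide_eq)
  have Dp: "D > 0"
  proof -
    have "K * D = P * K - K * (d+\<delta>)" by (simp add: D_def P_def algebra_simps)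
    also have "\<dots> > c * (d+\<delta>)" using E2' by (simp add: algebra_simps)
    finally have "c * (d+\<delta>) < K * D" .
    moreover have "c * (d+\<delta>) > 0" using pos dd by simp
    ultimately have "K * D > 0" by linarith
    then show ?thesis using pos by (simp add: zero_less_mult_iff)
  qed
  have Xb: "Xb = c * (d+\<delta>)/D" by (simp add: Xb_def D_def)
  have Xbp: "Xb > 0" using Xb Dp pos dd by simp
  have XbK: "Xb < K"
  proof -
    have "c * (d+\<delta>) < K * D" using E2' by (simp add: D_def P_def algebra_simps)
    then show ?thesis using Xb Dp by (simp add: pos_divide_less_eq mult.commute)
  qed
  have XbD: "Xb * D = c * (d+\<delta>)" using Xb Dp by simp
  have idX: "P * Xb = (d+\<delta>) * (c+Xb)" using XbD by (simp add: D_def P_def algebra_simps)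
  define z where "z = c + Xb"
  have zp: "z > 0" using Xbp pos by (simp add: z_def)
  have Xbz: "Xb = z - c" by (simp add: z_def)
  have Ibp: "Ib > 0" using pos Xbp XbK by (simp add: Ib_def)
  have Abp: "Ab > 0" unfolding Ab_def using pos Ibp by (intro divide_pos_pos add_pos_pos mult_pos_pos) auto
  have Kc: "K > c"
  proof (rule ccontr)
    assume "\<not> K > c"
    then have "\<alpha> * (K - c) \<le> 0" using pos by (intro mult_nonneg_nonpos) auto
    moreover have "(K + c) * (d + \<delta>) \<ge> 0" using pos dd by simp
    ultimately have "(K + c) * (d + \<delta>) / (\<alpha> * (K - c)) \<le> 0" by (intro divide_nonneg_nonpos) auto
    moreover have "m2 * \<phi> > 0" using pos by simp
    ultimately show False using cond_up by linarith
  qed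
  have cu: "P * (K - c) < (K + c) * (d + \<delta>)"
  proof -
    have "\<alpha> * (K - c) > 0" using pos Kc by simp
    then have "m2 * \<phi> * (\<alpha> * (K - c)) < (K + c) * (d + \<delta>)" using cond_up by (simp add: pos_less_divide_eq)
    then show ?thesis by (simp add: P_def algebra_simps)
  qed
  have Xb2: "2 * Xb > K - c"
  proof -
    have "(K - c) * D < 2 * c * (d+\<delta>)" using cu by (simp add: D_def P_def algebra_simps)
    then have "(K - c) * D < 2 * (Xb * D)" using XbD by simp
    then show ?thesis using Dp by (simp add: mult.commute)
  qed
  define p where "p = r * (1 - 2 * (z-c)/K) - \<phi> * \<alpha> * c * Ib/z^2"
  define g where "g = -(\<alpha> * (z-c)/z)"
  define q where "q = \<phi> * \<alpha> * (z-c)/z"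
  define \<mu> where "\<mu> = m1 * \<alpha> * (z-c)/z - lam * Ab/(a+Ab) - d"
  define w where "w = m2 * \<phi> * \<alpha> * c * Ib/z^2"
  define h where "h = lam * Ab/(a+Ab)"
  define Z where "Z = m2 * \<phi> * \<alpha> * (z-c)/z - (d+\<delta>)"
  have Z0: "Z = 0" using idX zp by (simp add: Z_def P_def z_def field_simps)
  have qp: "q > 0" using pos Xbp zp by (simp add: q_def Xbz[symmetric])
  have wp: "w > 0" using pos Ibp zp by (simp add: w_def)
  have pn: "p < 0"
  proof -
    have "p = r * Xb * (K - c - 2 * Xb) / (K * z)"
      using pos zp by (simp add: p_def Ib_def Xbz field_simps power2_eq_square)
    moreover have "r * Xb * (K - c - 2 * Xb) < 0" using pos Xbp Xb2 by (simp add: mult_pos_neg)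
    moreover have "K * z > 0" using pos zp by simp
    ultimately show ?thesis by (simp add: divide_neg_pos)
  qed
  have mun: "\<mu> < 0"
  proof -
    define Den where "Den = (a + Ab) * (lam + d) - lam * a"
    have Denp: "Den > 0" using pos Abp by (simp add: Den_def algebra_simps add_pos_pos)
    have aA: "a + Ab > 0" using pos Abp by simp
    have cl: "m1 * (d + \<delta>) * (a + Ab) < m2 * \<phi> * Den" using cond_low Denp by (simp add: Den_def pos_divide_less_eq)
    have mp2: "m2 * \<phi> > 0" using pos by simp
    have PX: "P * Xb / z = d + \<delta>" using idX zp by (simp add: z_def field_simps)
    have R: "\<alpha> * (z - c) / z = (d + \<delta>) / (m2 * \<phi>)"
    proof -
      have e: "m2 * \<phi> * (\<alpha> * (z - c) / z) = d + \<delta>" using PX by (simp add: P_def Xbz mult.assoc)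
      have "\<alpha> * (z - c) / z = m2 * \<phi> * (\<alpha> * (z - c) / z) / (m2 * \<phi>)" using pos by simp
      then show ?thesis unfolding e .
    qed
    have mu2: "\<mu> = m1 * ((d + \<delta>) / (m2 * \<phi>)) - Den / (a + Ab)"
    proof -
      have "Den / (a + Ab) = lam * Ab / (a + Ab) + d" using aA by (simp add: Den_def field_simps)
      moreover have "m1 * \<alpha> * (z - c) / z = m1 * (\<alpha> * (z - c) / z)" by simp
      ultimately show ?thesis unfolding \<mu>_def R by simp
    qed
    have "m1 * ((d + \<delta>) / (m2 * \<phi>)) < Den / (a + Ab)"
    proof -
      have "m1 * (d + \<delta>) * (a + Ab) / (m2 * \<phi> * (a + Ab)) < m2 * \<phi> * Den / (m2 * \<phi> * (a + Ab))"
        using cl mp2 aA by (intro divide_strict_right_mono) auto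
      then show ?thesis using mp2 aA pos by simp
    qed
    then show ?thesis using mu2 by simp
  qed
  obtain \<beta> Ks \<epsilon> \<kappa> where qf: "\<beta> > 0" "Ks > 0" "\<epsilon> > 0" "\<kappa> > 0" "\<beta>^2 \<le> w * q/4"
    "\<And>x s i a. 2 * w * x * (p * x + g * s - q * i) + 2 * q * i * (w * x + h * s) + 2 * \<beta> * (x * (w * x+h * s) + i * (p * x+g * s-q * i))
        + 2 * Ks * s * (\<mu> * s) + 2 * \<epsilon> * a * (\<sigma> * s+\<sigma> * i-\<eta> * a) \<le> -\<kappa> * (x^2+s^2+i^2+a^2)"
    using quad_form[OF pn qp wp mun pos(13) pos(14), of g h] by blast
  define L where "L = (\<lambda>v::state. (p * fst v + g * fst (snd v) - q * fst (snd (snd v)),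
      \<mu> * fst (snd v), w * fst v + h * fst (snd v) + Z * fst (snd (snd v)),
      \<sigma> * fst (snd v) + \<sigma> * fst (snd (snd v)) - \<eta> * snd (snd (snd v))))"
  have FD: "(pest_field r K \<alpha> \<phi> c m1 m2 lam a d \<delta> \<gamma> \<sigma> \<eta> has_derivative L) (at (Xb, 0, Ib, Ab))"
    unfolding L_def p_def g_def q_def \<mu>_def w_def h_def Z_def Xbz
    by (rule deriv_F0) (use zp pos Abp in auto)
  have Fe: "pest_field r K \<alpha> \<phi> c m1 m2 lam a d \<delta> \<gamma> \<sigma> \<eta> (Xb, 0, Ib, Ab) = 0"
  proof -
    have cX: "c + Xb > 0" using zp by (simp add: z_def)
    have f1: "\<phi> * \<alpha> * Xb * Ib / (c + Xb) = r * Xb * (K - Xb) / K"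
    proof -
      have KX: "K * Xb + K * c > 0" "K * c + K * Xb > 0" "Xb * K + c * K > 0" using pos cX
        by (simp_all add: distrib_left[symmetric] distrib_right[symmetric])
      have IbE: "Ib * (\<phi> * \<alpha> * K) = r * (c + Xb) * (K - Xb)" unfolding Ib_def using pos by simp
      have "\<phi> * \<alpha> * Xb * Ib / (c + Xb) = Xb * (Ib * (\<phi> * \<alpha> * K)) / (K * (c + Xb))"
        using pos cX KX by (simp add: field_simps)
      also have "\<dots> = Xb * (r * (c + Xb) * (K - Xb)) / (K * (c + Xb))" by (simp only: IbE)
      also have "\<dots> = r * Xb * (K - Xb) / K" using cX pos KX by (simp add: field_simps)
      finally show ?thesis .
    qed
    have f2: "r * Xb * (1 - Xb / K) = r * Xb * (K - Xb) / K" using pos by (simp add: field_simps)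
    have "r * Xb * (1 - Xb / K) - \<phi> * \<alpha> * Xb * Ib / (c + Xb) = 0" unfolding f1 f2 by simp
    moreover have "m2 * \<phi> * \<alpha> * Xb * Ib / (c + Xb) - (d + \<delta>) * Ib = 0"
    proof -
      have "Xb + c > 0" using cX by simp
      then show ?thesis using idX cX by (simp add: P_def field_simps)
    qed
    moreover have "\<gamma> + \<sigma> * Ib - \<eta> * Ab = 0" using pos by (simp add: Ab_def)
    ultimately show ?thesis by (simp add: pest_field_def zero_prod_def)
  qed
  define V where "V = (\<lambda>y::state. w * (fst y)^2 + q * (fst(snd(snd y)))^2 + 2 * \<beta> * (fst y) * (fst(snd(snd y)))
      + Ks * (fst(snd y))^2 + \<epsilon> * (snd(snd(snd y)))^2)"
  define DV where "DV = (\<lambda>y v::state. 2 * w * (fst y * fst v) + 2 * q * (fst(snd(snd y)) * fst(snd(snd v)))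
      + 2 * \<beta> * (fst y * fst(snd(snd v))) + 2 * \<beta> * (fst(snd(snd y)) * fst v)
      + 2 * Ks * (fst(snd y) * fst(snd v)) + 2 * \<epsilon> * (snd(snd(snd y)) * snd(snd(snd v))))"
  define m where "m = min (min (w/2) (q/2)) (min Ks \<epsilon>)"
  define M where "M = 3 * w/2 + 3 * q/2 + Ks + \<epsilon>"
  define B where "B = 2 * w + 2 * q + 4 * \<beta> + 2 * Ks + 2 * \<epsilon>"
  have mp: "m > 0" using wp qp qf by (simp add: m_def)
  have Mp: "M > 0" using wp qp qf by (simp add: M_def)
  have Bp: "B > 0" using wp qp qf by (simp add: B_def)
  have Vlo: "m * (norm y)^2 \<le> V y" for y
  proof -
    obtain x s i aa where y: "y = (x, s, i, aa)" using prod_cases4 by blast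
    have cb: "-(2 * \<beta> * x * i) \<le> (w/2) * x^2 + (q/2) * i^2" using cross_bound[OF wp qp qf(5)] by blast
    have "m * x^2 \<le> (w/2) * x^2" "m * i^2 \<le> (q/2) * i^2" "m * s^2 \<le> Ks * s^2" "m * aa^2 \<le> \<epsilon> * aa^2"
      by (intro mult_right_mono; simp add: m_def)+
    then show ?thesis using cb unfolding normsq V_def y by (simp add: algebra_simps)
  qed
  have Vhi: "V y \<le> M * (norm y)^2" for y
  proof -
    obtain x s i aa where y: "y = (x, s, i, aa)" using prod_cases4 by blast
    have cb: "2 * \<beta> * x * i \<le> (w/2) * x^2 + (q/2) * i^2" using cross_bound[OF wp qp qf(5)] by blast
    have "(3 * w/2) * x^2 \<le> M * x^2" "(3 * q/2) * i^2 \<le> M * i^2" "Ks * s^2 \<le> M * s^2" "\<epsilon> * aa^2 \<le> M * aa^2"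
      using wp qp qf by (intro mult_right_mono; simp add: M_def)+
    then show ?thesis using cb unfolding normsq V_def y by (simp add: algebra_simps)
  qed
  have VD: "(V has_derivative DV y) (at y)" for y
    unfolding V_def DV_def
    apply (rule has_derivative_eq_rhs)
     apply (rule derivative_eq_intros refl)+
    apply (rule ext)
    apply (simp add: algebra_simps power2_eq_square)
    done
  have DVL: "DV y (L y) \<le> - \<kappa> * (norm y)^2" for y
  proof -
    obtain x s i aa where y: "y = (x, s, i, aa)" using prod_cases4 by blast
    have "DV y (L y) = 2 * w * x * (p * x + g * s - q * i) + 2 * q * i * (w * x + h * s) + 2 * \<beta> * (x * (w * x+h * s) + i * (p * x+g * s-q * i))
        + 2 * Ks * s * (\<mu> * s) + 2 * \<epsilon> * aa * (\<sigma> * s+\<sigma> * i-\<eta> * aa)"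
      unfolding DV_def L_def y Z0 by (simp add: algebra_simps)
    also have "\<dots> \<le> -\<kappa> * (x^2+s^2+i^2+aa^2)" by (rule qf(6))
    finally show ?thesis unfolding normsq y by simp
  qed
  have DVB: "\<bar>DV y v\<bar> \<le> B * norm y * norm v" for y v
  proof -
    note cy = compb[of y] and cv = compb[of v]
    have w2: "2 * w \<ge> 0" "2 * q \<ge> 0" "2 * \<beta> \<ge> 0" "2 * Ks \<ge> 0" "2 * \<epsilon> \<ge> 0" using wp qp qf by auto
    have t1: "2 * w * (fst y * fst v) \<le> 2 * w * (norm y * norm v) \<and> -(2 * w * (fst y * fst v)) \<le> 2 * w * (norm y * norm v)"
      by (rule absprod[OF w2(1) cy(1) cv(1)])
    have t2: "2 * q * (fst(snd(snd y)) * fst(snd(snd v))) \<le> 2 * q * (norm y * norm v) \<and> -(2 * q * (fst(snd(snd y)) * fst(snd(snd v)))) \<le> 2 * q * (norm y * norm v)"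
      by (rule absprod[OF w2(2) cy(3) cv(3)])
    have t3: "2 * \<beta> * (fst y * fst(snd(snd v))) \<le> 2 * \<beta> * (norm y * norm v) \<and> -(2 * \<beta> * (fst y * fst(snd(snd v)))) \<le> 2 * \<beta> * (norm y * norm v)"
      by (rule absprod[OF w2(3) cy(1) cv(3)])
    have t4: "2 * \<beta> * (fst(snd(snd y)) * fst v) \<le> 2 * \<beta> * (norm y * norm v) \<and> -(2 * \<beta> * (fst(snd(snd y)) * fst v)) \<le> 2 * \<beta> * (norm y * norm v)"
      by (rule absprod[OF w2(3) cy(3) cv(1)])
    have t5: "2 * Ks * (fst(snd y) * fst(snd v)) \<le> 2 * Ks * (norm y * norm v) \<and> -(2 * Ks * (fst(snd y) * fst(snd v))) \<le> 2 * Ks * (norm y * norm v)"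
      by (rule absprod[OF w2(4) cy(2) cv(2)])
    have t6: "2 * \<epsilon> * (snd(snd(snd y)) * snd(snd(snd v))) \<le> 2 * \<epsilon> * (norm y * norm v) \<and> -(2 * \<epsilon> * (snd(snd(snd y)) * snd(snd(snd v)))) \<le> 2 * \<epsilon> * (norm y * norm v)"
      by (rule absprod[OF w2(5) cy(4) cv(4)])
    have Beq: "B * norm y * norm v = 2 * w * (norm y * norm v) + 2 * q * (norm y * norm v) + 2 * \<beta> * (norm y * norm v)
       + 2 * \<beta> * (norm y * norm v) + 2 * Ks * (norm y * norm v) + 2 * \<epsilon> * (norm y * norm v)"
      by (simp add: B_def algebra_simps)
    show ?thesis unfolding abs_le_iff Beq DV_def using t1 t2 t3 t4 t5 t6 by linarith
  qed
  show ?thesis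
    by (rule lyap_LAS[OF Fe FD mp Vlo Mp Vhi VD qf(4) DVL Bp DVB])
qed

end
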